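(* Let $\mathscr{O}$ be a reduced operad in $\mathbbm{k}$-vector spaces with $\mathscr{O}(1)=\mathbbm{k}$ (generated by the unit), and let $\mu\in\mathscr{O}(2)$ satisfy the right Leibniz condition. Then the image of the functor $\alpha:{\bm{\Sigma}}\text{-mod}\to\mathcal{F}_{\mathscr{O}}$ lies in $\mathcal{F}^\mu_{\mathscr{O}}$. In particular, every simple object of $\mathcal{F}_{\mathscr{O}}$ belongs to $\mathcal{F}^\mu_{\mathscr{O}}$.
   Context: Reduced means $\mathscr{O}(0)=0$. $\mathbf{Cat}\,\mathscr{O}$ is the $\mathbbm{k}$-linear PROP with objects $\mathbb{N}$ and $\mathbf{Cat}\,\mathscr{O}(m,n)=\bigoplus_{f:\{1..m\}\to\{1..n\}}\bigotimes_{i}\mathscr{O}(|f^{-1}(i)|)$, with $\boxplus$ addition on objects; $\mathcal{F}_{\mathscr{O}}$ is the category of $\mathbbm{k}$-linear functors $\mathbf{Cat}\,\mathscr{O}\to\mathbbm{k}$-vector spaces. ${\bm{\Sigma}}$-mod is the category of functors from finite sets and bijections to $\mathbbm{k}$-vector spaces. $\alpha$ sends a ${\bm{\Sigma}}$-module $M$ to the functor $n\mapsto M(n)$ on which $\mathbf{Cat}\,\mathscr{O}(n,n)\cong\mathbbm{k}[\mathfrak{S}_n]$ acts via the $\mathfrak{S}_n$-action and all morphisms in $\mathbf{Cat}\,\mathscr{O}(s,t)$ with $s\ne t$ act by zero (restriction along the augmentation $\mathscr{O}\to I$ to the unit operad). $\delta F(n)=F(n+1)$ with $\xi$ acting by $F(\xi\boxplus\mathrm{Id}_1)$.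 For $1\le i\le n$, $\mu_i(n)\in\mathbf{Cat}\,\mathscr{O}(n+1,n)$ is given by the map $j\mapsto j$ ($j\le n$), $n+1\mapsto i$, identity on singleton fibres and $\mu$ with inputs $(i,n+1)$ on the fibre over $i$; $\widetilde\mu_F(n)=F(\sum_i\mu_i(n)):\delta F(n)\to F(n)$. The right Leibniz condition: for all $n$ and $\nu\in\mathscr{O}(n)$, $\mu\circ(\nu\boxplus\mathrm{Id}_1)=\nu\circ\sum_{i=1}^n\mu_i(n)$ in $\mathscr{O}(n+1)$; under it $\widetilde\mu_F:\delta F\to F$ is natural. $\mathcal{F}^\mu_{\mathscr{O}}$ is the full subcategory of $F$ with $\widetilde\mu_F=0$. *)

theory Defs
  imports Complex_Main
begin

(* An operad in k-vector spaces, presented in its (equivalent) species form: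
   components O(S) for finite label sets S (of naturals), relabelling along
   injections (bijections onto the image), and full composition
   O(T) x prod_{t in T} O(S_t) -> O(disjoint union of the S_t). *)
record ('k, 'o) operad =
  osc   :: "'k \<Rightarrow> 'o \<Rightarrow> 'o"
  ocar  :: "nat set \<Rightarrow> 'o set"
  ocomp :: "nat set \<Rightarrow> (nat \<Rightarrow> nat set) \<Rightarrow> 'o \<Rightarrow> (nat \<Rightarrow> 'o) \<Rightarrow> 'o"
  orel  :: "nat set \<Rightarrow> (nat \<Rightarrow> nat) \<Rightarrow> 'o \<Rightarrow> 'o"
  ounit :: "nat \<Rightarrow> 'o"

definition lin_on :: "('k \<Rightarrow> 'a::plus \<Rightarrow> 'a) \<Rightarrow> ('k \<Rightarrow> 'b::plus \<Rightarrow> 'b) \<Rightarrow> 'a set \<Rightarrow> ('a \<Rightarrow> 'b) \<Rightarrow> bool"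
  where "lin_on s1 s2 A f \<longleftrightarrow>
    (\<forall>x\<in>A. \<forall>y\<in>A. f (x + y) = f x + f y) \<and> (\<forall>c. \<forall>x\<in>A. f (s1 c x) = s2 c (f x))"

definition pdisj :: "nat set \<Rightarrow> (nat \<Rightarrow> nat set) \<Rightarrow> bool"
  where "pdisj T Sf \<longleftrightarrow> (\<forall>t\<in>T. \<forall>u\<in>T. t \<noteq> u \<longrightarrow> Sf t \<inter> Sf u = {})"

definition comp_ok :: "('k, 'o) operad \<Rightarrow> nat set \<Rightarrow> (nat \<Rightarrow> nat set) \<Rightarrow> 'o \<Rightarrow> (nat \<Rightarrow> 'o) \<Rightarrow> bool"
  where "comp_ok P T Sf \<nu> \<nu>s \<longleftrightarrow> finite T \<and> (\<forall>t\<in>T. finite (Sf t)) \<and> pdisj T Sf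
     \<and> \<nu> \<in> ocar P T \<and> (\<forall>t\<in>T. \<nu>s t \<in> ocar P (Sf t))"

definition is_operad :: "('k::field, 'o::ab_group_add) operad \<Rightarrow> bool"
  where "is_operad P \<longleftrightarrow>
    vector_space (osc P)
  \<and> (\<forall>S. finite S \<longrightarrow> module.subspace (osc P) (ocar P S))
  \<comment> \<open>relabelling: a linear functor from finite sets and bijections\<close>
  \<and> (\<forall>S \<sigma>. finite S \<longrightarrow> inj_on \<sigma> S \<longrightarrow>
        (\<forall>x\<in>ocar P S. orel P S \<sigma> x \<in> ocar P (\<sigma> ` S)) \<and> lin_on (osc P) (osc P) (ocar P S) (orel P S \<sigma>))
  \<and> (\<forall>S \<sigma> \<sigma>'. finite S \<longrightarrow> (\<forall>s\<in>S. \<sigma> s = \<sigma>' s) \<longrightarrow> (\<forall>x\<in>ocar P S. orel P S \<sigma> x = orel P S \<sigma>' x))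
  \<and> (\<forall>S. finite S \<longrightarrow> (\<forall>x\<in>ocar P S. orel P S id x = x))
  \<and> (\<forall>S \<sigma> \<tau>. finite S \<longrightarrow> inj_on \<sigma> S \<longrightarrow> inj_on \<tau> (\<sigma> ` S) \<longrightarrow>
        (\<forall>x\<in>ocar P S. orel P (\<sigma> ` S) \<tau> (orel P S \<sigma> x) = orel P S (\<tau> \<circ> \<sigma>) x))
  \<comment> \<open>composition: well-defined, local and multilinear\<close>
  \<and> (\<forall>T Sf \<nu> \<nu>s. comp_ok P T Sf \<nu> \<nu>s \<longrightarrow> ocomp P T Sf \<nu> \<nu>s \<in> ocar P (\<Union>t\<in>T. Sf t))
  \<and> (\<forall>T Sf Sf' \<nu> \<nu>s \<nu>s'. comp_ok P T Sf \<nu> \<nu>s \<longrightarrow> (\<forall>t\<in>T. Sf t = Sf' t \<and> \<nu>s t = \<nu>s' t) \<longrightarrow>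
        ocomp P T Sf' \<nu> \<nu>s' = ocomp P T Sf \<nu> \<nu>s)
  \<and> (\<forall>T Sf a b \<nu>s c. comp_ok P T Sf a \<nu>s \<longrightarrow> b \<in> ocar P T \<longrightarrow>
        ocomp P T Sf (osc P c a + b) \<nu>s = osc P c (ocomp P T Sf a \<nu>s) + ocomp P T Sf b \<nu>s)
  \<and> (\<forall>T Sf \<nu> \<nu>s t a b c. comp_ok P T Sf \<nu> \<nu>s \<longrightarrow> t \<in> T \<longrightarrow> a \<in> ocar P (Sf t) \<longrightarrow> b \<in> ocar P (Sf t) \<longrightarrow>
        ocomp P T Sf \<nu> (\<nu>s(t := osc P c a + b)) =
          osc P c (ocomp P T Sf \<nu> (\<nu>s(t := a))) + ocomp P T Sf \<nu> (\<nu>s(t := b)))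
  \<comment> \<open>unit\<close>
  \<and> (\<forall>x. ounit P x \<in> ocar P {x})
  \<and> (\<forall>x \<sigma>. orel P {x} \<sigma> (ounit P x) = ounit P (\<sigma> x))
  \<and> (\<forall>x S \<nu>. finite S \<longrightarrow> \<nu> \<in> ocar P S \<longrightarrow> ocomp P {x} (\<lambda>_. S) (ounit P x) (\<lambda>_. \<nu>) = \<nu>)
  \<and> (\<forall>S \<nu>. finite S \<longrightarrow> \<nu> \<in> ocar P S \<longrightarrow> ocomp P S (\<lambda>s. {s}) \<nu> (ounit P) = \<nu>)
  \<comment> \<open>associativity\<close>
  \<and> (\<forall>T Sf Rf \<nu> \<nu>s \<rho>. comp_ok P T Sf \<nu> \<nu>s \<longrightarrow>
        comp_ok P (\<Union>t\<in>T. Sf t) Rf (ocomp P T Sf \<nu> \<nu>s) \<rho> \<longrightarrow>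
        ocomp P (\<Union>t\<in>T. Sf t) Rf (ocomp P T Sf \<nu> \<nu>s) \<rho> =
        ocomp P T (\<lambda>t. \<Union>s\<in>Sf t. Rf s) \<nu> (\<lambda>t. ocomp P (Sf t) Rf (\<nu>s t) \<rho>))
  \<comment> \<open>equivariance\<close>
  \<and> (\<forall>T Sf \<nu> \<nu>s \<sigma>. comp_ok P T Sf \<nu> \<nu>s \<longrightarrow> inj_on \<sigma> (\<Union>t\<in>T. Sf t) \<longrightarrow>
        orel P (\<Union>t\<in>T. Sf t) \<sigma> (ocomp P T Sf \<nu> \<nu>s) =
        ocomp P T (\<lambda>t. \<sigma> ` Sf t) \<nu> (\<lambda>t. orel P (Sf t) \<sigma> (\<nu>s t)))
  \<and> (\<forall>T Sf \<nu> \<nu>s \<tau>. comp_ok P T Sf \<nu> \<nu>s \<longrightarrow> inj_on \<tau> T \<longrightarrow>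
        ocomp P (\<tau> ` T) (\<lambda>u. Sf (the_inv_into T \<tau> u)) (orel P T \<tau> \<nu>) (\<lambda>u. \<nu>s (the_inv_into T \<tau> u)) =
        ocomp P T Sf \<nu> \<nu>s)"

definition reduced :: "('k, 'o::zero) operad \<Rightarrow> bool"
  where "reduced P \<longleftrightarrow> ocar P {} = {0}"

definition arity_one_unit :: "('k, 'o::zero) operad \<Rightarrow> bool"
  where "arity_one_unit P \<longleftrightarrow> (\<forall>x. ocar P {x} = range (\<lambda>c. osc P c (ounit P x)) \<and> ounit P x \<noteq> 0)"

definition fib :: "nat \<Rightarrow> (nat \<Rightarrow> nat) \<Rightarrow> nat \<Rightarrow> nat set"
  where "fib m f i = {x. x < m \<and> f x = i}"

(* generators (f, (nu_i)_i) of Cat O(m,n): nu_i in O(f^{-1}(i)) *)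
definition gen :: "('k, 'o) operad \<Rightarrow> nat \<Rightarrow> nat \<Rightarrow> (nat \<Rightarrow> nat) \<Rightarrow> (nat \<Rightarrow> 'o) \<Rightarrow> bool"
  where "gen P m n f \<nu>s \<longleftrightarrow> (\<forall>x<m. f x < n) \<and> (\<forall>i<n. \<nu>s i \<in> ocar P (fib m f i))"

(* composition in Cat O: (g, nu') o (f, nu) = (g o f, omega) *)
definition catcomp :: "('k, 'o) operad \<Rightarrow> nat \<Rightarrow> nat \<Rightarrow> (nat \<Rightarrow> nat) \<Rightarrow> (nat \<Rightarrow> 'o)
    \<Rightarrow> (nat \<Rightarrow> nat) \<Rightarrow> (nat \<Rightarrow> 'o) \<Rightarrow> nat \<Rightarrow> 'o"
  where "catcomp P m n g \<nu>s' f \<nu>s = (\<lambda>j. ocomp P (fib n g j) (\<lambda>i. fib m f i) (\<nu>s' j) \<nu>s)"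

(* mu_i(n) : n+1 -> n (0-based, i < n) *)
definition mu_map :: "nat \<Rightarrow> nat \<Rightarrow> nat \<Rightarrow> nat"
  where "mu_map n i = (\<lambda>x. if x < n then x else i)"

definition mu_lab :: "('k, 'o) operad \<Rightarrow> 'o \<Rightarrow> nat \<Rightarrow> nat \<Rightarrow> nat \<Rightarrow> 'o"
  where "mu_lab P \<mu> n i = (\<lambda>j. if j = i then orel P {0, 1} (\<lambda>k. if k = 0 then i else n) \<mu> else ounit P j)"

(* nu boxplus Id_1 : n+1 -> 2 *)
definition plus_map :: "nat \<Rightarrow> nat \<Rightarrow> nat"
  where "plus_map n = (\<lambda>x. if x < n then 0 else 1)"

definition plus_lab :: "('k, 'o) operad \<Rightarrow> 'o \<Rightarrow> nat \<Rightarrow> nat \<Rightarrow> 'o"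
  where "plus_lab P \<nu> n = (\<lambda>j. if j = 0 then \<nu> else ounit P n)"

(* right Leibniz: mu o (nu boxplus Id_1) = nu o sum_i mu_i(n) in O(n+1) *)
definition right_leibniz :: "('k, 'o::comm_monoid_add) operad \<Rightarrow> 'o \<Rightarrow> bool"
  where "right_leibniz P \<mu> \<longleftrightarrow> (\<forall>n. \<forall>\<nu>\<in>ocar P {..<n}.
     catcomp P (n + 1) 2 (\<lambda>_. 0) (\<lambda>_. \<mu>) (plus_map n) (plus_lab P \<nu> n) 0 =
     (\<Sum>i<n. catcomp P (n + 1) n (\<lambda>_. 0) (\<lambda>_. \<nu>) (mu_map n i) (mu_lab P \<mu> n i) 0))"

(* k-linear functors Cat O -> k-Vect: values V n (subspaces of a k-vector space),
   and the action Fm m n f nus of the generator (f, nus) in Cat O(m,n) *)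
definition is_lfun :: "('k::field, 'o::ab_group_add) operad \<Rightarrow> ('k \<Rightarrow> 'v::ab_group_add \<Rightarrow> 'v)
    \<Rightarrow> (nat \<Rightarrow> 'v set) \<Rightarrow> (nat \<Rightarrow> nat \<Rightarrow> (nat \<Rightarrow> nat) \<Rightarrow> (nat \<Rightarrow> 'o) \<Rightarrow> 'v \<Rightarrow> 'v) \<Rightarrow> bool"
  where "is_lfun P scV V Fm \<longleftrightarrow>
    vector_space scV
  \<and> (\<forall>n. module.subspace scV (V n))
  \<and> (\<forall>m n f \<nu>s. gen P m n f \<nu>s \<longrightarrow>
        (\<forall>v\<in>V m. Fm m n f \<nu>s v \<in> V n) \<and> lin_on scV scV (V m) (Fm m n f \<nu>s))
  \<and> (\<forall>m n f f' \<nu>s \<nu>s'. gen P m n f \<nu>s \<longrightarrow> (\<forall>x<m. f x = f' x) \<longrightarrow> (\<forall>i<n. \<nu>s i = \<nu>s' i) \<longrightarrow>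
        (\<forall>v\<in>V m. Fm m n f' \<nu>s' v = Fm m n f \<nu>s v))
  \<and> (\<forall>m n f \<nu>s i c a b. gen P m n f \<nu>s \<longrightarrow> i < n \<longrightarrow> a \<in> ocar P (fib m f i) \<longrightarrow> b \<in> ocar P (fib m f i) \<longrightarrow>
        (\<forall>v\<in>V m. Fm m n f (\<nu>s(i := osc P c a + b)) v =
                  scV c (Fm m n f (\<nu>s(i := a)) v) + Fm m n f (\<nu>s(i := b)) v))
  \<and> (\<forall>n. \<forall>v\<in>V n. Fm n n id (ounit P) v = v)
  \<and> (\<forall>m n p f \<nu>s g \<nu>s'. gen P m n f \<nu>s \<longrightarrow> gen P n p g \<nu>s' \<longrightarrow>
        (\<forall>v\<in>V m. Fm n p g \<nu>s' (Fm m n f \<nu>s v) = Fm m p (g \<circ> f) (catcomp P m n g \<nu>s' f \<nu>s) v))"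

(* tilde mu_F(n) = F(sum_i mu_i(n)) : F(n+1) -> F(n) *)
definition mu_tilde :: "('k, 'o) operad \<Rightarrow> 'o \<Rightarrow> (nat \<Rightarrow> nat \<Rightarrow> (nat \<Rightarrow> nat) \<Rightarrow> (nat \<Rightarrow> 'o) \<Rightarrow> 'v \<Rightarrow> 'v)
    \<Rightarrow> nat \<Rightarrow> 'v \<Rightarrow> 'v::comm_monoid_add"
  where "mu_tilde P \<mu> Fm n v = (\<Sum>i<n. Fm (n + 1) n (mu_map n i) (mu_lab P \<mu> n i) v)"

definition in_Fmu :: "('k::field, 'o::ab_group_add) operad \<Rightarrow> 'o \<Rightarrow> ('k \<Rightarrow> 'v::ab_group_add \<Rightarrow> 'v)
    \<Rightarrow> (nat \<Rightarrow> 'v set) \<Rightarrow> (nat \<Rightarrow> nat \<Rightarrow> (nat \<Rightarrow> nat) \<Rightarrow> (nat \<Rightarrow> 'o) \<Rightarrow> 'v \<Rightarrow> 'v) \<Rightarrow> bool"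
  where "in_Fmu P \<mu> scV V Fm \<longleftrightarrow> is_lfun P scV V Fm \<and> (\<forall>n. \<forall>v\<in>V (n + 1). mu_tilde P \<mu> Fm n v = 0)"

definition is_subfunctor :: "('k::field, 'o) operad \<Rightarrow> ('k \<Rightarrow> 'v::ab_group_add \<Rightarrow> 'v)
    \<Rightarrow> (nat \<Rightarrow> 'v set) \<Rightarrow> (nat \<Rightarrow> nat \<Rightarrow> (nat \<Rightarrow> nat) \<Rightarrow> (nat \<Rightarrow> 'o) \<Rightarrow> 'v \<Rightarrow> 'v) \<Rightarrow> (nat \<Rightarrow> 'v set) \<Rightarrow> bool"
  where "is_subfunctor P scV V Fm W \<longleftrightarrow>
    (\<forall>n. module.subspace scV (W n) \<and> W n \<subseteq> V n)
  \<and> (\<forall>m n f \<nu>s. gen P m n f \<nu>s \<longrightarrow> (\<forall>v\<in>W m. Fm m n f \<nu>s v \<in> W n))"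

definition simple_obj :: "('k::field, 'o::ab_group_add) operad \<Rightarrow> ('k \<Rightarrow> 'v::ab_group_add \<Rightarrow> 'v)
    \<Rightarrow> (nat \<Rightarrow> 'v set) \<Rightarrow> (nat \<Rightarrow> nat \<Rightarrow> (nat \<Rightarrow> nat) \<Rightarrow> (nat \<Rightarrow> 'o) \<Rightarrow> 'v \<Rightarrow> 'v) \<Rightarrow> bool"
  where "simple_obj P scV V Fm \<longleftrightarrow> is_lfun P scV V Fm \<and> (\<exists>n. V n \<noteq> {0})
    \<and> (\<forall>W. is_subfunctor P scV V Fm W \<longrightarrow> (\<forall>n. W n = {0}) \<or> (\<forall>n. W n = V n))"

(* Sigma-modules (skeletal form: S_n-representations M(n)) *)
definition is_sigma_mod :: "('k::field \<Rightarrow> 'v::ab_group_add \<Rightarrow> 'v) \<Rightarrow> (nat \<Rightarrow> 'v set)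
    \<Rightarrow> (nat \<Rightarrow> (nat \<Rightarrow> nat) \<Rightarrow> 'v \<Rightarrow> 'v) \<Rightarrow> bool"
  where "is_sigma_mod scV V act \<longleftrightarrow>
    vector_space scV
  \<and> (\<forall>n. module.subspace scV (V n))
  \<and> (\<forall>n \<sigma>. bij_betw \<sigma> {..<n} {..<n} \<longrightarrow>
        (\<forall>v\<in>V n. act n \<sigma> v \<in> V n) \<and> lin_on scV scV (V n) (act n \<sigma>))
  \<and> (\<forall>n \<sigma> \<sigma>'. (\<forall>x<n. \<sigma> x = \<sigma>' x) \<longrightarrow> (\<forall>v\<in>V n. act n \<sigma> v = act n \<sigma>' v))
  \<and> (\<forall>n. \<forall>v\<in>V n. act n id v = v)
  \<and> (\<forall>n \<sigma> \<tau>. bij_betw \<sigma> {..<n} {..<n} \<longrightarrow> bij_betw \<tau> {..<n} {..<n} \<longrightarrow>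
        (\<forall>v\<in>V n. act n \<sigma> (act n \<tau> v) = act n (\<sigma> \<circ> \<tau>) v))"

(* augmentation O -> I: the scalar c with nu = c * unit, for nu in O({x}) *)
definition aug :: "('k, 'o) operad \<Rightarrow> nat \<Rightarrow> 'o \<Rightarrow> 'k"
  where "aug P x \<nu> = (THE c. \<nu> = osc P c (ounit P x))"

(* alpha(M): restriction along the augmentation O -> I *)
definition alpha :: "('k::field, 'o) operad \<Rightarrow> ('k \<Rightarrow> 'v::zero \<Rightarrow> 'v) \<Rightarrow> (nat \<Rightarrow> (nat \<Rightarrow> nat) \<Rightarrow> 'v \<Rightarrow> 'v)
    \<Rightarrow> nat \<Rightarrow> nat \<Rightarrow> (nat \<Rightarrow> nat) \<Rightarrow> (nat \<Rightarrow> 'o) \<Rightarrow> 'v \<Rightarrow> 'v"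
  where "alpha P scV act m n f \<nu>s v =
    (if m = n \<and> bij_betw f {..<n} {..<n}
     then scV (\<Prod>i<n. aug P (the_inv_into {..<n} f i) (\<nu>s i)) (act n f v)
     else 0)"

end

theory Submission
  imports Defs
begin

lemma op_vs: "is_operad P \<Longrightarrow> vector_space (osc P)"
  unfolding is_operad_def by (elim conjE)
lemma op_sub: "is_operad P \<Longrightarrow> finite S \<Longrightarrow> module.subspace (osc P) (ocar P S)"
  unfolding is_operad_def by (elim conjE) blast
lemma op_lin1_all: assumes "is_operad P" shows "\<forall>T Sf a b \<nu>s c. comp_ok P T Sf a \<nu>s \<longrightarrow> b \<in> ocar P T \<longrightarrow>
        ocomp P T Sf (osc P c a + b) \<nu>s = osc P c (ocomp P T Sf a \<nu>s) + ocomp P T Sf b \<nu>s"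
  using assms unfolding is_operad_def by (elim conjE) assumption

lemma op_lin2_all: assumes "is_operad P" shows "\<forall>T Sf \<nu> \<nu>s t a b c. comp_ok P T Sf \<nu> \<nu>s \<longrightarrow> t \<in> T \<longrightarrow> a \<in> ocar P (Sf t) \<longrightarrow> b \<in> ocar P (Sf t) \<longrightarrow>
        ocomp P T Sf \<nu> (\<nu>s(t := osc P c a + b)) =
          osc P c (ocomp P T Sf \<nu> (\<nu>s(t := a))) + ocomp P T Sf \<nu> (\<nu>s(t := b))"
  using assms unfolding is_operad_def by (elim conjE) assumption

lemma op_local_all: assumes "is_operad P" shows "\<forall>T Sf Sf' \<nu> \<nu>s \<nu>s'. comp_ok P T Sf \<nu> \<nu>s \<longrightarrow> (\<forall>t\<in>T. Sf t = Sf' t \<and> \<nu>s t = \<nu>s' t) \<longrightarrow>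
        ocomp P T Sf' \<nu> \<nu>s' = ocomp P T Sf \<nu> \<nu>s"
  using assms unfolding is_operad_def by (elim conjE) assumption

lemma op_unitL_all: assumes "is_operad P" shows "\<forall>x S \<nu>. finite S \<longrightarrow> \<nu> \<in> ocar P S \<longrightarrow> ocomp P {x} (\<lambda>_. S) (ounit P x) (\<lambda>_. \<nu>) = \<nu>"
  using assms unfolding is_operad_def by (elim conjE) assumption

lemma op_unit_all: assumes "is_operad P" shows "\<forall>x. ounit P x \<in> ocar P {x}"
  using assms unfolding is_operad_def by (elim conjE) assumption

lemma op_lin1: "is_operad P \<Longrightarrow> comp_ok P T Sf a \<nu>s \<Longrightarrow> b \<in> ocar P T \<Longrightarrow>
   ocomp P T Sf (osc P c a + b) \<nu>s = osc P c (ocomp P T Sf a \<nu>s) + ocomp P T Sf b \<nu>s"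
  using op_lin1_all by blast
lemma op_lin2: "is_operad P \<Longrightarrow> comp_ok P T Sf \<nu> \<nu>s \<Longrightarrow> t \<in> T \<Longrightarrow> a \<in> ocar P (Sf t) \<Longrightarrow> b \<in> ocar P (Sf t) \<Longrightarrow>
        ocomp P T Sf \<nu> (\<nu>s(t := osc P c a + b)) =
          osc P c (ocomp P T Sf \<nu> (\<nu>s(t := a))) + ocomp P T Sf \<nu> (\<nu>s(t := b))"
  using op_lin2_all by blast
lemma op_local: "is_operad P \<Longrightarrow> comp_ok P T Sf \<nu> \<nu>s \<Longrightarrow> (\<forall>t\<in>T. Sf t = Sf' t \<and> \<nu>s t = \<nu>s' t) \<Longrightarrow>
        ocomp P T Sf' \<nu> \<nu>s' = ocomp P T Sf \<nu> \<nu>s"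
  using op_local_all by blast
lemma op_unitL: "is_operad P \<Longrightarrow> finite S \<Longrightarrow> \<nu> \<in> ocar P S \<Longrightarrow> ocomp P {x} (\<lambda>_. S) (ounit P x) (\<lambda>_. \<nu>) = \<nu>"
  using op_unitL_all by blast
lemma op_unit_in: "is_operad P \<Longrightarrow> ounit P x \<in> ocar P {x}"
  using op_unit_all by blast

lemma aug_scale:
  assumes "is_operad P" "arity_one_unit P"
  shows "aug P x (osc P c (ounit P x)) = c"
proof -
  interpret vector_space "osc P" using op_vs[OF assms(1)] .
  have "ounit P x \<noteq> 0" using assms(2) by (simp add: arity_one_unit_def)
  then show ?thesis unfolding aug_def by (intro the_equality) auto
qed

lemma aug_rep:
  assumes "is_operad P" "arity_one_unit P" "\<nu> \<in> ocar P {x}"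
  shows "\<nu> = osc P (aug P x \<nu>) (ounit P x)"
proof -
  obtain c where "\<nu> = osc P c (ounit P x)" using assms(2,3) by (auto simp: arity_one_unit_def)
  then show ?thesis using aug_scale[OF assms(1,2)] by simp
qed

lemma aug_zero:
  assumes "is_operad P" "arity_one_unit P"
  shows "aug P x 0 = 0"
proof -
  interpret vector_space "osc P" using op_vs[OF assms(1)] .
  show ?thesis using aug_scale[OF assms, of x 0] by simp
qed

lemma aug_lin:
  assumes "is_operad P" "arity_one_unit P" "a \<in> ocar P {x}" "b \<in> ocar P {x}"
  shows "aug P x (osc P c a + b) = c * aug P x a + aug P x b"
proof -
  interpret vector_space "osc P" using op_vs[OF assms(1)] .
  have "osc P c a + b = osc P (c * aug P x a + aug P x b) (ounit P x)"
    apply (subst aug_rep[OF assms(1,2,3)], subst aug_rep[OF assms(1,2,4)])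
    by (simp add: scale_left_distrib)
  then show ?thesis using aug_scale[OF assms(1,2)] by simp
qed

lemma ocomp_zero_in:
  assumes "is_operad P" "comp_ok P T Sf \<nu> \<nu>s" "t \<in> T" "\<nu>s t = 0"
  shows "ocomp P T Sf \<nu> \<nu>s = 0"
proof -
  interpret vector_space "osc P" using op_vs[OF assms(1)] .
  have z: "0 \<in> ocar P (Sf t)" using op_sub[OF assms(1)] assms(2,3) subspace_0
    by (auto simp: comp_ok_def)
  have e: "\<nu>s(t := 0) = \<nu>s" using assms(4) by auto
  have "ocomp P T Sf \<nu> (\<nu>s(t := osc P 1 0 + 0)) =
          osc P 1 (ocomp P T Sf \<nu> (\<nu>s(t := 0))) + ocomp P T Sf \<nu> (\<nu>s(t := 0))"
    by (rule op_lin2[OF assms(1,2,3) z z])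
  then show ?thesis using e by simp
qed

lemma ocomp_unit_scaled:
  assumes "is_operad P" "finite (Sf i)" "\<nu>s i \<in> ocar P (Sf i)"
  shows "ocomp P {i} Sf (osc P c (ounit P i)) \<nu>s = osc P c (\<nu>s i)"
proof -
  interpret vector_space "osc P" using op_vs[OF assms(1)] .
  have ok: "comp_ok P {i} Sf (ounit P i) \<nu>s"
    using assms op_unit_in[OF assms(1)] by (simp add: comp_ok_def pdisj_def)
  have z: "0 \<in> ocar P {i}" using op_sub[OF assms(1), of "{i}"] subspace_0 by simp
  have ok0: "comp_ok P {i} Sf 0 \<nu>s" using ok z by (simp add: comp_ok_def)
  have "ocomp P {i} Sf (osc P 1 0 + 0) \<nu>s = osc P 1 (ocomp P {i} Sf 0 \<nu>s) + ocomp P {i} Sf 0 \<nu>s"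
    by (rule op_lin1[OF assms(1) ok0 z])
  then have c0: "ocomp P {i} Sf 0 \<nu>s = 0" by simp
  have "ocomp P {i} Sf (osc P c (ounit P i) + 0) \<nu>s = osc P c (ocomp P {i} Sf (ounit P i) \<nu>s) + ocomp P {i} Sf 0 \<nu>s"
    by (rule op_lin1[OF assms(1) ok z])
  moreover have "ocomp P {i} Sf (ounit P i) \<nu>s = ocomp P {i} (\<lambda>_. Sf i) (ounit P i) (\<lambda>_. \<nu>s i)"
    by (rule op_local[OF assms(1) ok, symmetric]) simp
  moreover have "\<dots> = \<nu>s i" by (rule op_unitL[OF assms(1,2,3)])
  ultimately show ?thesis using c0 by simp
qed


lemma op_rel_in: assumes "is_operad P" shows "\<forall>S \<sigma>. finite S \<longrightarrow> inj_on \<sigma> S \<longrightarrow>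
        (\<forall>x\<in>ocar P S. orel P S \<sigma> x \<in> ocar P (\<sigma> ` S)) \<and> lin_on (osc P) (osc P) (ocar P S) (orel P S \<sigma>)"
  using assms unfolding is_operad_def by (elim conjE) assumption

lemma fib_mu: "j < n \<Longrightarrow> i < n \<Longrightarrow> fib (n + 1) (mu_map n i) j = (if j = i then {i, n} else {j})"
  unfolding fib_def mu_map_def by auto

lemma gen_mu:
  assumes "is_operad P" "\<mu> \<in> ocar P {0, 1}" "i < n"
  shows "gen P (n + 1) n (mu_map n i) (mu_lab P \<mu> n i)"
  unfolding gen_def
proof (intro conjI allI impI)
  fix x assume "x < n + 1" then show "mu_map n i x < n" using assms(3) by (simp add: mu_map_def)
next
  fix j assume j: "j < n"
  show "mu_lab P \<mu> n i j \<in> ocar P (fib (n + 1) (mu_map n i) j)"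
  proof (cases "j = i")
    case True
    let ?s = "\<lambda>k::nat. if k = 0 then i else n"
    have "inj_on ?s {0, 1}" using assms(3) by (auto simp: inj_on_def)
    then have "orel P {0,1} ?s \<mu> \<in> ocar P (?s ` {0, 1})"
      using op_rel_in[OF assms(1), rule_format, of "{0,1}" ?s] assms(2) by simp
    moreover have "?s ` {0, 1} = {i, n}" by auto
    moreover have "fib (n + 1) (mu_map n i) j = {i, n}" using fib_mu[OF j assms(3)] True by simp
    moreover have "mu_lab P \<mu> n i j = orel P {0,1} ?s \<mu>" using True by (simp add: mu_lab_def)
    ultimately show ?thesis by simp
  next
    case False
    moreover have "fib (n + 1) (mu_map n i) j = {j}" using fib_mu[OF j assms(3)] False by simp
    ultimately show ?thesis using op_unit_in[OF assms(1)] by (simp add: mu_lab_def)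
  qed
qed

lemma lfun_vs: "is_lfun P scV V Fm \<Longrightarrow> vector_space scV"
  unfolding is_lfun_def by (elim conjE)
lemma lfun_sub: "is_lfun P scV V Fm \<Longrightarrow> module.subspace scV (V n)"
  unfolding is_lfun_def by (elim conjE) blast
lemma lfun_gen_all: "is_lfun P scV V Fm \<Longrightarrow> \<forall>m n f \<nu>s. gen P m n f \<nu>s \<longrightarrow>
        (\<forall>v\<in>V m. Fm m n f \<nu>s v \<in> V n) \<and> lin_on scV scV (V m) (Fm m n f \<nu>s)"
  unfolding is_lfun_def by (elim conjE) assumption
lemma lfun_lab_all: "is_lfun P scV V Fm \<Longrightarrow> \<forall>m n f \<nu>s i c a b. gen P m n f \<nu>s \<longrightarrow> i < n \<longrightarrow> a \<in> ocar P (fib m f i) \<longrightarrow> b \<in> ocar P (fib m f i) \<longrightarrow>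
        (\<forall>v\<in>V m. Fm m n f (\<nu>s(i := osc P c a + b)) v =
                  scV c (Fm m n f (\<nu>s(i := a)) v) + Fm m n f (\<nu>s(i := b)) v)"
  unfolding is_lfun_def by (elim conjE) assumption

lemma lfun_facts:
  assumes "is_lfun P scV V Fm"
  shows "vector_space scV" "\<And>n. module.subspace scV (V n)"
    "\<And>m n f \<nu>s v. gen P m n f \<nu>s \<Longrightarrow> v \<in> V m \<Longrightarrow> Fm m n f \<nu>s v \<in> V n"
    "\<And>m n f \<nu>s. gen P m n f \<nu>s \<Longrightarrow> lin_on scV scV (V m) (Fm m n f \<nu>s)"
    "\<And>m n f \<nu>s i c a b v. gen P m n f \<nu>s \<Longrightarrow> i < n \<Longrightarrow> a \<in> ocar P (fib m f i) \<Longrightarrow> b \<in> ocar P (fib m f i) \<Longrightarrow>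
        v\<in>V m \<Longrightarrow> Fm m n f (\<nu>s(i := osc P c a + b)) v =
                  scV c (Fm m n f (\<nu>s(i := a)) v) + Fm m n f (\<nu>s(i := b)) v"
  using lfun_vs[OF assms] lfun_sub[OF assms] lfun_gen_all[OF assms] lfun_lab_all[OF assms] by blast+

lemma lfun_zero:
  assumes "is_lfun P scV V Fm" "gen P m n f \<nu>s"
  shows "Fm m n f \<nu>s 0 = 0"
proof -
  interpret vector_space scV using lfun_facts(1)[OF assms(1)] .
  have "0 \<in> V m" using lfun_facts(2)[OF assms(1)] subspace_0 by blast
  then have "Fm m n f \<nu>s (0 + 0) = Fm m n f \<nu>s 0 + Fm m n f \<nu>s 0"
    using lfun_facts(4)[OF assms] unfolding lin_on_def by blast
  then show ?thesis by simp
qed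

lemma lfun_zero_lab:
  assumes "is_lfun P scV V Fm" "gen P m n f \<nu>s" "i < n" "\<nu>s i = 0" "is_operad P" "0 \<in> ocar P (fib m f i)" "v \<in> V m"
  shows "Fm m n f \<nu>s v = 0"
proof -
  interpret vector_space scV using lfun_facts(1)[OF assms(1)] .
  have "Fm m n f (\<nu>s(i := osc P 1 0 + 0)) v = scV 1 (Fm m n f (\<nu>s(i := 0)) v) + Fm m n f (\<nu>s(i := 0)) v"
    by (rule lfun_facts(5)[OF assms(1,2,3,6,6,7)])
  moreover have "osc P 1 0 + 0 = 0"
  proof -
    interpret O: vector_space "osc P" using op_vs[OF assms(5)] .
    show ?thesis by simp
  qed
  moreover have "\<nu>s(i := 0) = \<nu>s" using assms(4) by auto
  ultimately show ?thesis by simp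
qed


lemma gen_up_zero:
  assumes "is_lfun P scV V Fm" "is_operad P" "reduced P" "gen P m n f \<nu>s" "m < n" "v \<in> V m"
  shows "Fm m n f \<nu>s v = 0"
proof -
  have "card (f ` {..<m}) \<le> m" using card_image_le[of "{..<m}" f] by simp
  then have "\<not> {..<n} \<subseteq> f ` {..<m}" using assms(5) card_mono[of "f ` {..<m}" "{..<n}"] by auto
  then obtain i where i: "i < n" "i \<notin> f ` {..<m}" by auto
  then have fe: "fib m f i = {}" unfolding fib_def by auto
  then have "\<nu>s i = 0" using assms(3,4) i(1) unfolding gen_def reduced_def by auto
  moreover have "0 \<in> ocar P (fib m f i)" using fe assms(3) by (simp add: reduced_def)
  ultimately show ?thesis using lfun_zero_lab[OF assms(1,4) i(1) _ assms(2) _ assms(6)] by blast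
qed

lemma simple_in_Fmu:
  assumes "simple_obj P scV V Fm" "is_operad P" "reduced P" "\<mu> \<in> ocar P {0, 1}"
  shows "in_Fmu P \<mu> scV V Fm"
proof -
  have L: "is_lfun P scV V Fm" and S: "\<And>W. is_subfunctor P scV V Fm W \<Longrightarrow> (\<forall>n. W n = {0}) \<or> (\<forall>n. W n = V n)"
    using assms(1) unfolding simple_obj_def by blast+
  interpret vector_space scV using lfun_vs[OF L] .
  have sub: "\<And>n. subspace (V n)" using lfun_sub[OF L] .
  have "mu_tilde P \<mu> Fm n v = 0" if v: "v \<in> V (n + 1)" for n v
  proof -
    define W where "W k = (if k \<le> n then V k else {0})" for k
    have "is_subfunctor P scV V Fm W"
      unfolding is_subfunctor_def
    proof (intro conjI allI impI ballI)
      fix k show "subspace (W k)" using sub by (simp add: W_def)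
      show "W k \<subseteq> V k" using sub subspace_0 by (auto simp: W_def)
    next
      fix a b f \<nu>s w assume g: "gen P a b f \<nu>s" and w: "w \<in> W a"
      show "Fm a b f \<nu>s w \<in> W b"
      proof (cases "a \<le> n")
        case True
        then have wV: "w \<in> V a" using w by (simp add: W_def)
        show ?thesis
        proof (cases "b \<le> n")
          case True then show ?thesis using lfun_facts(3)[OF L g wV] by (simp add: W_def)
        next
          case False
          then have "Fm a b f \<nu>s w = 0" using gen_up_zero[OF L assms(2,3) g _ wV] \<open>a \<le> n\<close> by simp
          then show ?thesis using sub subspace_0 by (simp add: W_def)
        qed
      next
        case False
        then have "w = 0" using w by (simp add: W_def)
        then show ?thesis using lfun_zero[OF L g] sub subspace_0 by (simp add: W_def)
      qed
    qed
    from S[OF this] show ?thesis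
    proof
      assume "\<forall>k. W k = {0}"
      then have Vn: "V n = {0}" by (metis W_def order_refl)
      have "Fm (n + 1) n (mu_map n i) (mu_lab P \<mu> n i) v = 0" if "i < n" for i
        using lfun_facts(3)[OF L gen_mu[OF assms(2,4) that] v] Vn by simp
      then show ?thesis unfolding mu_tilde_def by simp
    next
      assume "\<forall>k. W k = V k"
      then have "V (n + 1) = {0}" by (metis W_def Suc_n_not_le_n Suc_eq_plus1)
      then have "v = 0" using v by simp
      then have "Fm (n + 1) n (mu_map n i) (mu_lab P \<mu> n i) v = 0" if "i < n" for i
        using lfun_zero[OF L gen_mu[OF assms(2,4) that]] by simp
      then show ?thesis unfolding mu_tilde_def by simp
    qed
  qed
  then show ?thesis using L unfolding in_Fmu_def by blast
qed


lemma sm_vs: "is_sigma_mod scV V act \<Longrightarrow> vector_space scV"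
  unfolding is_sigma_mod_def by (elim conjE)
lemma sm_sub: "is_sigma_mod scV V act \<Longrightarrow> module.subspace scV (V n)"
  unfolding is_sigma_mod_def by (elim conjE) blast
lemma sm_in: "is_sigma_mod scV V act \<Longrightarrow> bij_betw \<sigma> {..<n} {..<n} \<Longrightarrow> v \<in> V n \<Longrightarrow> act n \<sigma> v \<in> V n"
  unfolding is_sigma_mod_def by (elim conjE) blast
lemma sm_lin: "is_sigma_mod scV V act \<Longrightarrow> bij_betw \<sigma> {..<n} {..<n} \<Longrightarrow> lin_on scV scV (V n) (act n \<sigma>)"
  unfolding is_sigma_mod_def by (elim conjE) blast
lemma sm_cong: "is_sigma_mod scV V act \<Longrightarrow> (\<forall>x<n. \<sigma> x = \<sigma>' x) \<Longrightarrow> v \<in> V n \<Longrightarrow> act n \<sigma> v = act n \<sigma>' v"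
  unfolding is_sigma_mod_def by (elim conjE) blast
lemma sm_id: "is_sigma_mod scV V act \<Longrightarrow> v \<in> V n \<Longrightarrow> act n id v = v"
  unfolding is_sigma_mod_def by (elim conjE) blast
lemma sm_comp: "is_sigma_mod scV V act \<Longrightarrow> bij_betw \<sigma> {..<n} {..<n} \<Longrightarrow> bij_betw \<tau> {..<n} {..<n} \<Longrightarrow>
        v \<in> V n \<Longrightarrow> act n \<sigma> (act n \<tau> v) = act n (\<sigma> \<circ> \<tau>) v"
  unfolding is_sigma_mod_def by (elim conjE) blast

lemma sm_add: "is_sigma_mod scV V act \<Longrightarrow> bij_betw \<sigma> {..<n} {..<n} \<Longrightarrow> x \<in> V n \<Longrightarrow> y \<in> V n \<Longrightarrow>
   act n \<sigma> (x + y) = act n \<sigma> x + act n \<sigma> y"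
  using sm_lin unfolding lin_on_def by blast
lemma sm_scale: "is_sigma_mod scV V act \<Longrightarrow> bij_betw \<sigma> {..<n} {..<n} \<Longrightarrow> x \<in> V n \<Longrightarrow>
   act n \<sigma> (scV c x) = scV c (act n \<sigma> x)"
  using sm_lin unfolding lin_on_def by blast
lemma sm_zero: "is_sigma_mod scV V act \<Longrightarrow> bij_betw \<sigma> {..<n} {..<n} \<Longrightarrow> act n \<sigma> 0 = 0"
proof -
  assume a: "is_sigma_mod scV V act" "bij_betw \<sigma> {..<n} {..<n}"
  interpret vector_space scV using sm_vs[OF a(1)] .
  have "0 \<in> V n" using sm_sub[OF a(1)] subspace_0 by blast
  then show ?thesis using sm_add[OF a, of 0 0] by simp
qed

lemma alpha_zero: "is_sigma_mod scV V act \<Longrightarrow> alpha P scV act m n f \<nu>s 0 = 0"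
proof -
  assume a: "is_sigma_mod scV V act"
  interpret vector_space scV using sm_vs[OF a] .
  show ?thesis unfolding alpha_def using sm_zero[OF a] by auto
qed

lemma fib_bij: "bij_betw f {..<n} {..<n} \<Longrightarrow> i < n \<Longrightarrow> fib n f i = {the_inv_into {..<n} f i}"
  unfolding fib_def
  apply (auto simp: bij_betw_def the_inv_into_f_f)
   apply (metis lessThan_iff the_inv_into_into subset_refl imageI)
  apply (metis f_the_inv_into_f image_eqI lessThan_iff)
  done


lemma alpha_gen:
  assumes sm: "is_sigma_mod scV V act"
  shows "(\<forall>v\<in>V m. alpha P scV act m n f \<nu>s v \<in> V n) \<and> lin_on scV scV (V m) (alpha P scV act m n f \<nu>s)"
proof -
  interpret vector_space scV using sm_vs[OF sm] .
  have sub: "\<And>n. subspace (V n)" using sm_sub[OF sm] .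
  show ?thesis
  proof (cases "m = n \<and> bij_betw f {..<n} {..<n}")
    case True
    then have e: "\<And>v. alpha P scV act m n f \<nu>s v = scV (\<Prod>i<n. aug P (the_inv_into {..<n} f i) (\<nu>s i)) (act n f v)"
      by (simp add: alpha_def)
    show ?thesis unfolding e lin_on_def using True sub
      by (auto simp: sm_in[OF sm] sm_add[OF sm] sm_scale[OF sm] subspace_scale scale_right_distrib
          scale_left_commute)
  next
    case False
    then have e: "\<And>v. alpha P scV act m n f \<nu>s v = 0" by (auto simp: alpha_def)
    show ?thesis unfolding e lin_on_def using sub subspace_0 by auto
  qed
qed

lemma alpha_cong:
  assumes sm: "is_sigma_mod scV V act" and "\<forall>x<m. f x = f' x" "\<forall>i<n. \<nu>s i = \<nu>s' i" "v \<in> V m"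
  shows "alpha P scV act m n f' \<nu>s' v = alpha P scV act m n f \<nu>s v"
proof (cases "m = n")
  case True
  have b: "bij_betw f' {..<n} {..<n} = bij_betw f {..<n} {..<n}"
    using assms(2) True by (intro bij_betw_cong) auto
  have "the_inv_into {..<n} f' i = the_inv_into {..<n} f i" if "bij_betw f {..<n} {..<n}" "i < n" for i
  proof -
    have "f' ` {..<n} = f ` {..<n}" using assms(2) True by (auto simp: image_def)
    have "the_inv_into {..<n} f i < n" using that by (meson bij_betw_apply bij_betw_the_inv_into lessThan_iff)
    moreover have "f' (the_inv_into {..<n} f i) = i"
      using that calculation assms(2) True f_the_inv_into_f_bij_betw[of f "{..<n}" "{..<n}" i] by simp
    moreover have "inj_on f' {..<n}" using that b by (simp add: bij_betw_def)
    ultimately show ?thesis by (intro the_inv_into_f_eq) auto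
  qed
  then have p: "bij_betw f {..<n} {..<n} \<Longrightarrow> (\<Prod>i<n. aug P (the_inv_into {..<n} f' i) (\<nu>s' i)) = (\<Prod>i<n. aug P (the_inv_into {..<n} f i) (\<nu>s i))"
    using assms(3) by (intro prod.cong) auto
  have "act n f' v = act n f v" using sm_cong[OF sm, of n f' f v] assms(2,4) True by simp
  then show ?thesis unfolding alpha_def using b p True by auto
next
  case False
  then show ?thesis by (simp add: alpha_def)
qed

lemma alpha_id:
  assumes sm: "is_sigma_mod scV V act" and op: "is_operad P" "arity_one_unit P" and v: "v \<in> V n"
  shows "alpha P scV act n n id (ounit P) v = v"
proof -
  interpret vector_space scV using sm_vs[OF sm] .
  have b: "bij_betw id {..<n} {..<n}" by simp
  have "aug P (the_inv_into {..<n} id i) (ounit P i) = 1" if "i < n" for i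
  proof -
    have "the_inv_into {..<n} id i = i" using that by (intro the_inv_into_f_eq) auto
    moreover have "aug P i (osc P 1 (ounit P i)) = 1" by (rule aug_scale[OF op])
    moreover have "osc P 1 (ounit P i) = ounit P i"
    proof -
      interpret O: vector_space "osc P" using op_vs[OF op(1)] .
      show ?thesis by simp
    qed
    ultimately show ?thesis by simp
  qed
  then have "(\<Prod>i<n. aug P (the_inv_into {..<n} id i) (ounit P i)) = 1" by simp
  then show ?thesis unfolding alpha_def using b sm_id[OF sm v] by simp
qed


lemma alpha_lab:
  assumes sm: "is_sigma_mod scV V act" and op: "is_operad P" "arity_one_unit P"
    and g: "gen P m n f \<nu>s" and i: "i < n" and ab: "a \<in> ocar P (fib m f i)" "b \<in> ocar P (fib m f i)"
  shows "alpha P scV act m n f (\<nu>s(i := osc P c a + b)) v =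
                  scV c (alpha P scV act m n f (\<nu>s(i := a)) v) + alpha P scV act m n f (\<nu>s(i := b)) v"
proof (cases "m = n \<and> bij_betw f {..<n} {..<n}")
  case True
  interpret vector_space scV using sm_vs[OF sm] .
  define x where "x = the_inv_into {..<n} f i"
  have fx: "fib m f i = {x}" using fib_bij[of f n i] True i by (simp add: x_def)
  define R where "R = (\<Prod>j\<in>{..<n}-{i}. aug P (the_inv_into {..<n} f j) (\<nu>s j))"
  have pr: "(\<Prod>j<n. aug P (the_inv_into {..<n} f j) ((\<nu>s(i:=w)) j)) = aug P x w * R" for w
  proof -
    have "(\<Prod>j<n. aug P (the_inv_into {..<n} f j) ((\<nu>s(i:=w)) j)) =
       aug P x w * (\<Prod>j\<in>{..<n}-{i}. aug P (the_inv_into {..<n} f j) ((\<nu>s(i:=w)) j))"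
      using i by (subst prod.remove[of _ i]) (auto simp: x_def)
    also have "(\<Prod>j\<in>{..<n}-{i}. aug P (the_inv_into {..<n} f j) ((\<nu>s(i:=w)) j)) = R"
      unfolding R_def by (intro prod.cong) auto
    finally show ?thesis .
  qed
  have al: "aug P x (osc P c a + b) = c * aug P x a + aug P x b"
    using aug_lin[OF op] ab fx by simp
  show ?thesis unfolding alpha_def using True pr al
    by (simp add: distrib_right scale_left_distrib mult.assoc)
next
  case False
  interpret vector_space scV using sm_vs[OF sm] .
  show ?thesis using False unfolding alpha_def by auto
qed


lemma alpha_comp:
  assumes sm: "is_sigma_mod scV V act" and op: "is_operad P" "arity_one_unit P" and red: "reduced P"
    and gf: "gen P m n f \<nu>s" and gg: "gen P n p g \<nu>s'" and v: "v \<in> V m"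
  shows "alpha P scV act n p g \<nu>s' (alpha P scV act m n f \<nu>s v) =
         alpha P scV act m p (g \<circ> f) (catcomp P m n g \<nu>s' f \<nu>s) v"
proof -
  interpret vector_space scV using sm_vs[OF sm] .
  interpret O: vector_space "osc P" using op_vs[OF op(1)] .
  have sub: "\<And>n. subspace (V n)" using sm_sub[OF sm] .
  consider (A) "m = n" "bij_betw f {..<n} {..<n}" "p = n" "bij_betw g {..<n} {..<n}"
    | (B) "\<not> (m = n \<and> bij_betw f {..<n} {..<n})"
    | (C) "m = n" "bij_betw f {..<n} {..<n}" "\<not> (n = p \<and> bij_betw g {..<p} {..<p})"
    by blast
  then show ?thesis
  proof cases
    case A
    note bf = A(2) and bg = A(4)
    define h where "h = g \<circ> f"
    have bh: "bij_betw h {..<n} {..<n}" unfolding h_def by (rule bij_betw_trans[OF bf bg])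
    define ig where "ig j = the_inv_into {..<n} g j" for j
    define invf where "invf i = the_inv_into {..<n} f i" for i
    define B where "B i = aug P (invf i) (\<nu>s i)" for i
    define A' where "A' j = aug P (ig j) (\<nu>s' j)" for j
    have big: "bij_betw ig {..<n} {..<n}" unfolding ig_def by (rule bij_betw_the_inv_into[OF bg])
    have ah: "aug P (the_inv_into {..<n} h j) (catcomp P n n g \<nu>s' f \<nu>s j) = A' j * B (ig j)"
      if j: "j < n" for j
    proof -
      have igj: "ig j < n" using bij_betw_apply[OF big] j by auto
      have fg: "fib n g j = {ig j}" using fib_bij[OF bg j] by (simp add: ig_def)
      have ff: "fib n f (ig j) = {invf (ig j)}" using fib_bij[OF bf igj] by (simp add: invf_def)
      have c1: "catcomp P n n g \<nu>s' f \<nu>s j = ocomp P {ig j} (fib n f) (\<nu>s' j) \<nu>s"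
        unfolding catcomp_def fg ..
      have s'j: "\<nu>s' j \<in> ocar P {ig j}" using gg j A(3) fg unfolding gen_def by auto
      have sig: "\<nu>s (ig j) \<in> ocar P {invf (ig j)}" using gf igj A(1) ff unfolding gen_def by auto
      have "ocomp P {ig j} (fib n f) (\<nu>s' j) \<nu>s = osc P (A' j) (\<nu>s (ig j))"
        unfolding A'_def
        apply (subst aug_rep[OF op s'j])
        apply (rule ocomp_unit_scaled[OF op(1)])
        using ff sig by auto
      also have "\<dots> = osc P (A' j * B (ig j)) (ounit P (invf (ig j)))"
        by (subst aug_rep[OF op sig]) (simp add: B_def)
      finally have c2: "catcomp P n n g \<nu>s' f \<nu>s j = osc P (A' j * B (ig j)) (ounit P (invf (ig j)))"
        using c1 by simp
      have ifn: "invf (ig j) < n" using bij_betw_apply[OF bij_betw_the_inv_into[OF bf]] igj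
        by (auto simp: invf_def)
      have "f (invf (ig j)) = ig j" unfolding invf_def
        using f_the_inv_into_f_bij_betw[OF bf] igj by simp
      moreover have "g (ig j) = j" unfolding ig_def using f_the_inv_into_f_bij_betw[OF bg] j by simp
      ultimately have "the_inv_into {..<n} h j = invf (ig j)"
        using bh ifn by (intro the_inv_into_f_eq) (auto simp: bij_betw_def h_def)
      then show ?thesis using c2 aug_scale[OF op] by simp
    qed
    have "(\<Prod>j<n. aug P (the_inv_into {..<n} h j) (catcomp P n n g \<nu>s' f \<nu>s j))
        = (\<Prod>j<n. A' j * B (ig j))" using ah by (intro prod.cong) auto
    also have "\<dots> = (\<Prod>j<n. A' j) * (\<Prod>j<n. B (ig j))" by (rule prod.distrib)
    also have "(\<Prod>j<n. B (ig j)) = (\<Prod>i<n. B i)" by (rule prod.reindex_bij_betw[OF big])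
    finally have P: "(\<Prod>j<n. aug P (the_inv_into {..<n} h j) (catcomp P n n g \<nu>s' f \<nu>s j))
        = (\<Prod>j<n. A' j) * (\<Prod>i<n. B i)" .
    have vn: "v \<in> V n" using v A(1) by simp
    have afv: "act n f v \<in> V n" using sm_in[OF sm bf vn] .
    have "alpha P scV act n n g \<nu>s' (alpha P scV act n n f \<nu>s v) =
          scV ((\<Prod>j<n. A' j) * (\<Prod>i<n. B i)) (act n h v)"
      unfolding alpha_def using bf bg
      by (simp add: A'_def B_def ig_def invf_def sm_scale[OF sm bg afv] sm_comp[OF sm bg bf vn] h_def)
    also have "\<dots> = alpha P scV act n n h (catcomp P n n g \<nu>s' f \<nu>s) v"
      unfolding alpha_def using bh P by simp
    finally show ?thesis using A(1,3) h_def by simp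
  next
    case B
    have L: "alpha P scV act n p g \<nu>s' (alpha P scV act m n f \<nu>s v) = 0"
    proof -
      have "alpha P scV act m n f \<nu>s v = 0" using B unfolding alpha_def by auto
      then show ?thesis using alpha_zero[OF sm] by simp
    qed
    have "alpha P scV act m p (g \<circ> f) (catcomp P m n g \<nu>s' f \<nu>s) v = 0"
    proof (cases "m = p \<and> bij_betw (g \<circ> f) {..<p} {..<p}")
      case False then show ?thesis unfolding alpha_def by auto
    next
      case True
      then have mp: "m = p" and bh: "bij_betw (g \<circ> f) {..<m} {..<m}" by auto
      have injf: "inj_on f {..<m}" using bh inj_on_imageI2 by (auto simp: bij_betw_def)
      have fsub: "f ` {..<m} \<subseteq> {..<n}" using gf by (auto simp: gen_def)
      have "\<exists>i. i < n \<and> i \<notin> f ` {..<m}"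
      proof (rule ccontr)
        assume "\<not> ?thesis"
        then have "f ` {..<m} = {..<n}" using fsub by auto
        then have "bij_betw f {..<m} {..<n}" using injf by (simp add: bij_betw_def)
        then have "m = n" using bij_betw_same_card by fastforce
        then show False using B \<open>bij_betw f {..<m} {..<n}\<close> by simp
      qed
      then obtain i where i: "i < n" "i \<notin> f ` {..<m}" by blast
      have fe: "fib m f i = {}" using i unfolding fib_def by auto
      have si: "\<nu>s i = 0" using gf i(1) red fe unfolding gen_def reduced_def by auto
      define j where "j = g i"
      have jp: "j < p" using gg i(1) by (simp add: gen_def j_def)
      have ok: "comp_ok P (fib n g j) (fib m f) (\<nu>s' j) \<nu>s"
        unfolding comp_ok_def pdisj_def
      proof (intro conjI ballI impI allI)
        show "finite (fib n g j)" by (rule finite_subset[of _ "{..<n}"]) (auto simp: fib_def)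
        fix t :: nat show "finite (fib m f t)" by (rule finite_subset[of _ "{..<m}"]) (auto simp: fib_def)
      next
        fix t u :: nat assume "t \<noteq> u" then show "fib m f t \<inter> fib m f u = {}" by (auto simp: fib_def)
      next
        show "\<nu>s' j \<in> ocar P (fib n g j)" using gg jp by (simp add: gen_def)
      next
        fix t :: nat assume "t \<in> fib n g j" then show "\<nu>s t \<in> ocar P (fib m f t)" using gf by (simp add: gen_def fib_def)
      qed
      have "catcomp P m n g \<nu>s' f \<nu>s j = 0"
        unfolding catcomp_def using ocomp_zero_in[OF op(1) ok _ si] i(1) by (simp add: fib_def j_def)
      then have "aug P (the_inv_into {..<p} (g \<circ> f) j) (catcomp P m n g \<nu>s' f \<nu>s j) = 0"
        using aug_zero[OF op] by simp
      then have "(\<Prod>k<p. aug P (the_inv_into {..<p} (g \<circ> f) k) (catcomp P m n g \<nu>s' f \<nu>s k)) = 0"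
        using jp by (auto simp: prod_zero_iff)
      then show ?thesis unfolding alpha_def using True by simp
    qed
    then show ?thesis using L by simp
  next
  case C
  have L: "alpha P scV act n p g \<nu>s' (alpha P scV act m n f \<nu>s v) = 0"
    unfolding alpha_def[of P scV act n p g] by (subst if_not_P[OF C(3)]) (rule refl)
  have "\<not> (m = p \<and> bij_betw (g \<circ> f) {..<p} {..<p})"
  proof
    assume H: "m = p \<and> bij_betw (g \<circ> f) {..<p} {..<p}"
    then have np: "n = p" using C by simp
    have fim: "f ` {..<n} = {..<n}" using C(2) by (simp add: bij_betw_def)
    have "g ` {..<n} = (g \<circ> f) ` {..<n}" unfolding image_comp[symmetric] fim ..
    also have "\<dots> = {..<n}" using H np bij_betw_imp_surj_on by blast
    finally have im: "g ` {..<n} = {..<n}" .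
    then have "inj_on g {..<n}" by (intro eq_card_imp_inj_on) simp_all
    then have "bij_betw g {..<p} {..<p}" using im np unfolding bij_betw_def by blast
    then show False using C np by simp
  qed
  then have "alpha P scV act m p (g \<circ> f) (catcomp P m n g \<nu>s' f \<nu>s) v = 0"
    unfolding alpha_def[of P scV act m p] by (subst if_not_P[OF \<open>\<not> (m = p \<and> bij_betw (g \<circ> f) {..<p} {..<p})\<close>]) (rule refl)
  then show ?thesis using L by simp
qed
qed

lemma alpha_lfun:
  assumes sm: "is_sigma_mod scV V act" and op: "is_operad P" "arity_one_unit P" and red: "reduced P"
  shows "is_lfun P scV V (alpha P scV act)"
  unfolding is_lfun_def
proof (intro conjI allI impI ballI)
  show "vector_space scV" using sm_vs[OF sm] .
  fix n show "module.subspace scV (V n)" using sm_sub[OF sm] .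
next
  fix m n f \<nu>s v assume "gen P m n f \<nu>s" "v \<in> V m"
  then show "alpha P scV act m n f \<nu>s v \<in> V n" using alpha_gen[OF sm] by blast
next
  fix m n f \<nu>s assume "gen P m n f \<nu>s"
  then show "lin_on scV scV (V m) (alpha P scV act m n f \<nu>s)" using alpha_gen[OF sm] by blast
next
  fix m n f f' \<nu>s \<nu>s' v assume "gen P m n f \<nu>s" "\<forall>x<m. f x = f' x" "\<forall>i<n. \<nu>s i = \<nu>s' i" "v \<in> V m"
  then show "alpha P scV act m n f' \<nu>s' v = alpha P scV act m n f \<nu>s v" using alpha_cong[OF sm] by blast
next
  fix m n f \<nu>s i c a b v assume "gen P m n f \<nu>s" "i < n" "a \<in> ocar P (fib m f i)" "b \<in> ocar P (fib m f i)" "v \<in> V m"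
  then show "alpha P scV act m n f (\<nu>s(i := osc P c a + b)) v =
                  scV c (alpha P scV act m n f (\<nu>s(i := a)) v) + alpha P scV act m n f (\<nu>s(i := b)) v"
    using alpha_lab[OF sm op] by blast
next
  fix n v assume "v \<in> V n"
  then show "alpha P scV act n n id (ounit P) v = v" using alpha_id[OF sm op] by blast
next
  fix m n p f \<nu>s g \<nu>s' v assume "gen P m n f \<nu>s" "gen P n p g \<nu>s'" "v \<in> V m"
  then show "alpha P scV act n p g \<nu>s' (alpha P scV act m n f \<nu>s v) =
         alpha P scV act m p (g \<circ> f) (catcomp P m n g \<nu>s' f \<nu>s) v"
    using alpha_comp[OF sm op red] by blast
qed

theorem proposition3p9:
  fixes P :: "('k::field, 'o::ab_group_add) operad" and \<mu> :: 'o
  assumes "is_operad P"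
    and "reduced P"
    and "arity_one_unit P"
    and "\<mu> \<in> ocar P {0, 1}"
    and "right_leibniz P \<mu>"
  shows "(\<forall>(scV :: 'k \<Rightarrow> 'v::ab_group_add \<Rightarrow> 'v) V act. is_sigma_mod scV V act \<longrightarrow>
            in_Fmu P \<mu> scV V (alpha P scV act))
       \<and> (\<forall>(scV :: 'k \<Rightarrow> 'v \<Rightarrow> 'v) V Fm. simple_obj P scV V Fm \<longrightarrow> in_Fmu P \<mu> scV V Fm)"
proof (intro conjI allI impI)
  fix scV :: "'k \<Rightarrow> 'v::ab_group_add \<Rightarrow> 'v" and V act
  assume sm: "is_sigma_mod scV V act"
  have L: "is_lfun P scV V (alpha P scV act)" using alpha_lfun[OF sm assms(1,3,2)] .
  have "mu_tilde P \<mu> (alpha P scV act) n v = 0" for n v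
    unfolding mu_tilde_def alpha_def by simp
  then show "in_Fmu P \<mu> scV V (alpha P scV act)" using L unfolding in_Fmu_def by blast
next
  fix scV :: "'k \<Rightarrow> 'v \<Rightarrow> 'v" and V Fm
  assume "simple_obj P scV V Fm"
  then show "in_Fmu P \<mu> scV V Fm" using simple_in_Fmu assms(1,2,4) by blast
qed

end
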